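(* Let $n$ be even and $k\ge 2$. Let $f(x)=a_0(x)+2a_1(x)+\cdots+2^{k-1}a_{k-1}(x)$ from $\mathbb{V}_n$ to $\mathbb{Z}_{2^k}$, where $a_0,\ldots,a_{k-2}$ are linearly independent Boolean functions. Then $f$ is gbent if and only if $\mathcal{A}=a_{k-1}\oplus\langle a_0,\ldots,a_{k-2}\rangle$ is a $(k-1)$-dimensional affine space of bent functions such that for every $g_i,g_j,g_l\in\mathcal{A}$ the function $g_ig_j\oplus g_ig_l\oplus g_jg_l$ is bent. (In particular, whether $f$ is gbent depends only on the affine space $\mathcal{A}$, not on the choice of basis $a_0,\ldots,a_{k-2}$ of its direction space or on the coset representative $a_{k-1}$.)
   Context: $\mathbb{V}_n$ is an $n$-dimensional $\mathbb{F}_2$-vector space with inner product $u\cdot x$. A Boolean $g$ is bent if $|\sum_x(-1)^{g(x)\oplus u\cdot x}|=2^{n/2}$ for all $u$. $f$ is gbent if $|\sum_x\zeta_{2^k}^{f(x)}(-1)^{u\cdot x}|=2^{n/2}$ for all $u$, $\zeta_{2^k}=e^{2\pi i/2^k}$. $\langle\cdot\rangle$ is $\mathbb{F}_2$-span and $a\oplus L=\{a\oplus h:h\in L\}$. *)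

theory Defs
  imports "HOL-Analysis.Analysis"
begin

definition Vn :: "nat \<Rightarrow> (nat \<Rightarrow> bool) set" where
  "Vn n = {x. \<forall>i. n \<le> i \<longrightarrow> \<not> x i}"

definition ip :: "nat \<Rightarrow> (nat \<Rightarrow> bool) \<Rightarrow> (nat \<Rightarrow> bool) \<Rightarrow> bool" where
  "ip n u x = odd (card {i. i < n \<and> u i \<and> x i})"

definition sgn_b :: "bool \<Rightarrow> real" where
  "sgn_b b = (if b then -1 else 1)"

definition bent :: "nat \<Rightarrow> ((nat \<Rightarrow> bool) \<Rightarrow> bool) \<Rightarrow> bool" where
  "bent n g \<longleftrightarrow> (\<forall>u\<in>Vn n.
     \<bar>\<Sum>x\<in>Vn n. sgn_b (g x \<noteq> ip n u x)\<bar> = 2 powr (real n / 2))"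

text \<open>Generalized bent: f : V_n -> Z_{2^k}, values represented by naturals (taken mod 2^k
  implicitly since zeta^(2^k) = 1).\<close>
definition gbent :: "nat \<Rightarrow> nat \<Rightarrow> ((nat \<Rightarrow> bool) \<Rightarrow> nat) \<Rightarrow> bool" where
  "gbent n k f \<longleftrightarrow> (\<forall>u\<in>Vn n.
     cmod (\<Sum>x\<in>Vn n. cis (2 * pi * real (f x) / 2 ^ k) * complex_of_real (sgn_b (ip n u x)))
       = 2 powr (real n / 2))"

definition xor_sum :: "(nat \<Rightarrow> (nat \<Rightarrow> bool) \<Rightarrow> bool) \<Rightarrow> nat set \<Rightarrow> (nat \<Rightarrow> bool) \<Rightarrow> bool" where
  "xor_sum a S x = odd (card {i\<in>S. a i x})"

definition lin_indep_bool :: "nat \<Rightarrow> (nat \<Rightarrow> (nat \<Rightarrow> bool) \<Rightarrow> bool) \<Rightarrow> nat \<Rightarrow> bool" where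
  "lin_indep_bool n a m \<longleftrightarrow>
     (\<forall>S. S \<subseteq> {..<m} \<longrightarrow> (\<forall>x\<in>Vn n. \<not> xor_sum a S x) \<longrightarrow> S = {})"

definition aff_space :: "((nat \<Rightarrow> bool) \<Rightarrow> bool) \<Rightarrow> (nat \<Rightarrow> (nat \<Rightarrow> bool) \<Rightarrow> bool) \<Rightarrow> nat
    \<Rightarrow> ((nat \<Rightarrow> bool) \<Rightarrow> bool) set" where
  "aff_space c a m = {(\<lambda>x. c x \<noteq> xor_sum a S x) | S. S \<subseteq> {..<m}}"

end

theory Submission
  imports Defs "HOL-Computational_Algebra.Polynomial"
begin

definition cp :: "int poly \<Rightarrow> complex poly" where "cp p = map_poly of_int p"

lemma coeff_cp [simp]: "coeff (cp p) i = of_int (coeff p i)"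
  by (simp add: cp_def coeff_map_poly)

lemma cp_add [simp]: "cp (p + q) = cp p + cp q"
  by (rule poly_eqI) simp
lemma cp_diff [simp]: "cp (p - q) = cp p - cp q"
  by (rule poly_eqI) simp
lemma cp_minus [simp]: "cp (- p) = - cp p"
  by (rule poly_eqI) simp
lemma cp_mult [simp]: "cp (p * q) = cp p * cp q"
  by (rule poly_eqI) (simp add: coeff_mult)
lemma cp_const [simp]: "cp [:c:] = [:of_int c:]"
  by (rule poly_eqI) (simp add: coeff_pCons split: nat.splits)
lemma cp_0 [simp]: "cp 0 = 0"
  by (rule poly_eqI) simp
lemma cp_1 [simp]: "cp 1 = 1"
  by (rule poly_eqI) (simp add: coeff_1)
lemma cp_monom [simp]: "cp (monom c n) = monom (of_int c) n"
  by (rule poly_eqI) (simp add: coeff_monom)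
lemma cp_smult [simp]: "cp (smult c p) = smult (of_int c) (cp p)"
  by (rule poly_eqI) simp
lemma cp_power [simp]: "cp (p ^ n) = cp p ^ n"
  by (induction n) simp_all
lemma cp_pCons [simp]: "cp (pCons a p) = pCons (of_int a) (cp p)"
  by (rule poly_eqI) (simp add: coeff_pCons split: nat.splits)

lemma poly_cp_of_int: "poly (cp p) (of_int x) = of_int (poly p x)"
  by (induction p) simp_all

lemma poly_cp_1: "poly (cp p) 1 = of_int (poly p 1)"
  using poly_cp_of_int[of p 1] by simp

lemma poly_cp_pcompose: "poly (cp (pcompose p q)) w = poly (cp p) (poly (cp q) w)"
  by (induction p) (simp_all add: pcompose_pCons)

lemma cnj_poly_cp: "cnj (poly (cp p) w) = poly (cp p) (cnj w)"
proof -
  have "map_poly cnj (cp p) = cp p"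
    by (rule poly_eqI) (simp add: coeff_map_poly)
  then show ?thesis by (simp add: poly_cnj)
qed

lemma pow_expand: "\<exists>E::int poly. [:1,-1:]^(2^j) = 1 + monom 1 (2^j) + smult 2 E"
proof (induction j)
  case 0
  have "[:1,-1:] = (1::int poly) + monom 1 1 + smult 2 [:0,-1:]"
    by (rule poly_eqI) (simp add: coeff_pCons coeff_monom coeff_1 split: nat.splits)
  then show ?case by (simp only: power_0 power_one_right) blast
next
  case (Suc j)
  then obtain E where E: "[:1,-1:]^(2^j) = (1::int poly) + monom 1 (2^j) + smult 2 E" by blast
  define X :: "int poly" where "X = monom 1 (2^j)"
  have XX: "X * X = monom 1 (2^Suc j)" by (simp add: X_def mult_monom mult_2)
  have "([:1,-1:]::int poly)^(2^Suc j) = ([:1,-1:]^(2^j))^2"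
    by (simp add: power_mult[symmetric] mult.commute)
  also have "\<dots> = (1 + X + smult 2 E)^2" using E by (simp add: X_def)
  also have "\<dots> = 1 + X * X + smult 2 (X + smult 2 (E + X * E + E * E))"
    by (simp only: numeral_mult_conv_smult[symmetric]) algebra
  finally show ?case using XX by auto
qed

locale cyc = fixes m :: nat assumes m_pos: "1 \<le> m"
begin

definition N :: nat where "N = 2^m"
definition z :: complex where "z = cis (pi / 2^m)"
definition F :: "int poly" where "F = monom 1 N + 1"

lemma N_ge2: "N \<ge> 2"
proof -
  have "(2::nat)^1 \<le> 2^m" using m_pos by (intro power_increasing) auto
  then show ?thesis by (simp add: N_def)
qed

lemma N_pos: "N > 0" using N_ge2 by simp

lemma z_N: "z ^ N = -1"
proof -
  have "z ^ N = cis (real N * (pi / 2^m))" unfolding z_def by (rule Complex.DeMoivre)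
  also have "\<dots> = cis pi" by (simp add: N_def)
  finally show ?thesis by simp
qed

lemma z_2N: "z ^ (2*N) = 1"
proof -
  have "z ^ (2*N) = (z^N)^2" by (simp add: power_mult[symmetric] mult.commute)
  then show ?thesis by (simp add: z_N)
qed

lemma norm_z: "cmod z = 1" by (simp add: z_def)

lemma z_pow_eq_1: "z ^ e = 1 \<longleftrightarrow> 2 * N dvd e"
proof
  assume "2 * N dvd e"
  then obtain t where "e = 2 * N * t" by blast
  then show "z ^ e = 1" using power_mult[of z "2*N" t] z_2N by simp
next
  assume h: "z ^ e = 1"
  have "z ^ e = cis (real e * (pi / 2^m))" unfolding z_def by (rule Complex.DeMoivre)
  then have "cos (real e * (pi / 2^m)) = 1" using h by (metis cis.sel(1) complex.sel(1) one_complex.sel(1))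
  then obtain t :: int where t: "real e * (pi / 2^m) = t * 2 * pi" by (auto simp: cos_one_2pi_int)
  then have "real e = t * 2 * 2^m" by (simp add: field_simps)
  then have "int e = t * 2 * 2^m" by (metis of_int_eq_iff of_int_mult of_int_numeral of_int_of_nat_eq of_int_power)
  then have "int (2 * N) dvd int e" by (simp add: N_def)
  then show "2 * N dvd e" by (simp only: of_nat_dvd_iff)
qed

lemma z_ne_1: "z \<noteq> 1"
  using z_N by (metis N_pos one_neq_neg_one power_one)

lemma cnj_z: "cnj z = z ^ (2 * N - 1)"
proof -
  obtain q where q: "2 * N = Suc q" using N_pos by (cases "2*N") auto
  have a: "z * z ^ (2 * N - 1) = 1" using z_2N q by simp
  have b: "z * cnj z = 1" using complex_norm_square[of z] norm_z by simp
  have "cnj z = cnj z * (z * z ^ (2 * N - 1))" using a by simp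
  also have "\<dots> = (z * cnj z) * z ^ (2 * N - 1)" by (simp only: mult_ac)
  also have "\<dots> = z ^ (2 * N - 1)" using b by simp
  finally show ?thesis .
qed

lemma degree_F: "degree F = N"
  using N_pos by (simp add: F_def degree_add_eq_left degree_monom_eq)

lemma coeff_F_N: "coeff F N = 1"
  using N_pos by (simp add: F_def coeff_monom)

lemma F_root: "w ^ N = -1 \<Longrightarrow> poly (cp F) w = 0"
  by (simp add: F_def poly_monom)

lemma poly_F_1: "poly F 1 = 2" by (simp add: F_def poly_monom)


lemma pcompose_power_gen: "pcompose (p ^ n) q = (pcompose p q) ^ n"
  by (induction n) (simp_all add: pcompose_1 pcompose_mult)

lemma P_eq: "pcompose F [:1,-1:] = [:1,-1:]^N + 1"
proof -
  have "monom (1::int) N = [:0,1:]^N" by (simp add: monom_altdef)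
  then have "pcompose (monom (1::int) N) [:1,-1:] = [:1,-1:]^N"
    by (simp add: pcompose_power_gen pcompose_pCons)
  then show ?thesis by (simp add: F_def pcompose_add pcompose_1)
qed

lemma P_coeffs:
  shows "coeff (pcompose F [:1,-1:]) 0 = 2"
    and "\<And>i. i < N \<Longrightarrow> even (coeff (pcompose F [:1,-1:]) i)"
    and "odd (coeff (pcompose F [:1,-1:]) N)"
proof -
  obtain E where E: "[:1,-1:]^N = (1::int poly) + monom 1 N + smult 2 E"
    using pow_expand[of m] by (auto simp: N_def)
  have P: "pcompose F [:1,-1:] = 2 + monom 1 N + smult 2 E"
    using E by (simp add: P_eq)
  have c0: "coeff (pcompose F [:1,-1:]) 0 = 2"
  proof -
    have "coeff (pcompose F [:1,-1:]) 0 = poly (pcompose F [:1,-1:]) 0"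
      by (simp add: poly_0_coeff_0)
    also have "\<dots> = 2" using N_pos by (simp add: P_eq)
    finally show ?thesis .
  qed
  then show "coeff (pcompose F [:1,-1:]) 0 = 2" .
  show "even (coeff (pcompose F [:1,-1:]) i)" if "i < N" for i
  proof (cases "i = 0")
    case True then show ?thesis using c0 by simp
  next
    case False
    then have "coeff (pcompose F [:1,-1:]) i = 2 * coeff E i"
      using that by (simp add: P coeff_monom numeral_poly coeff_pCons split: nat.splits)
    then show ?thesis by simp
  qed
  show "odd (coeff (pcompose F [:1,-1:]) N)"
  proof -
    have "coeff (pcompose F [:1,-1:]) N = 1 + 2 * coeff E N"
      using N_pos by (simp add: P coeff_monom numeral_poly coeff_pCons split: nat.splits)
    then show ?thesis by simp
  qed
qed

lemma no_factor:
  fixes G H :: "int poly"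
  assumes FGH: "F = G * H" and dG: "degree G \<ge> 1" and dH: "degree H \<ge> 1"
  shows False
proof -
  define L :: "int poly" where "L = [:1,-1:]"
  define P where "P = pcompose F L"
  define G' where "G' = pcompose G L"
  define H' where "H' = pcompose H L"
  have PGH: "P = G' * H'" by (simp add: P_def G'_def H'_def FGH pcompose_mult)
  have dL: "degree L = 1" by (simp add: L_def)
  have dG': "degree G' = degree G" by (simp add: G'_def degree_pcompose dL)
  have dH': "degree H' = degree H" by (simp add: H'_def degree_pcompose dL)
  have "G \<noteq> 0" "H \<noteq> 0" using dG dH by auto
  then have dsum: "degree G + degree H = N" using degree_F FGH by (simp add: degree_mult_eq)
  have Pc0: "coeff P 0 = 2" and Pev: "\<And>i. i < N \<Longrightarrow> even (coeff P i)" and PoN: "odd (coeff P N)"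
    using P_coeffs by (simp_all add: P_def L_def)
  have "coeff P N = coeff G' (degree G') * coeff H' (degree H')"
    using PGH dsum dG' dH' coeff_mult_degree_sum[of G' H'] by simp
  then have oG: "odd (coeff G' (degree G'))" and oH: "odd (coeff H' (degree H'))"
    using PoN by auto
  define i0 where "i0 = (LEAST i. odd (coeff G' i))"
  define j0 where "j0 = (LEAST i. odd (coeff H' i))"
  have i0: "odd (coeff G' i0)" unfolding i0_def using oG by (rule LeastI)
  have j0: "odd (coeff H' j0)" unfolding j0_def using oH by (rule LeastI)
  have i0le: "i0 \<le> degree G'" unfolding i0_def using oG by (rule Least_le)
  have j0le: "j0 \<le> degree H'" unfolding j0_def using oH by (rule Least_le)
  have ilt: "even (coeff G' i)" if "i < i0" for i
    using not_less_Least[OF that[unfolded i0_def]] i0_def by simp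
  have jlt: "even (coeff H' i)" if "i < j0" for i
    using not_less_Least[OF that[unfolded j0_def]] j0_def by simp
  have "odd (coeff P (i0 + j0))"
  proof -
    have "coeff P (i0 + j0) = (\<Sum>i\<le>i0+j0. coeff G' i * coeff H' (i0 + j0 - i))"
      by (simp add: PGH coeff_mult)
    also have "\<dots> = coeff G' i0 * coeff H' (i0 + j0 - i0) +
        (\<Sum>i\<in>{..i0+j0} - {i0}. coeff G' i * coeff H' (i0 + j0 - i))"
      by (rule sum.remove) auto
    finally have eq: "coeff P (i0 + j0) = coeff G' i0 * coeff H' j0 +
        (\<Sum>i\<in>{..i0+j0} - {i0}. coeff G' i * coeff H' (i0 + j0 - i))" by simp
    have "even (\<Sum>i\<in>{..i0+j0} - {i0}. coeff G' i * coeff H' (i0 + j0 - i))"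
    proof (rule dvd_sum)
      fix i assume "i \<in> {..i0+j0} - {i0}"
      then have "i < i0 \<or> (i > i0 \<and> i \<le> i0 + j0)" by auto
      then show "2 dvd coeff G' i * coeff H' (i0 + j0 - i)"
      proof
        assume "i < i0" then show ?thesis using ilt by simp
      next
        assume "i0 < i \<and> i \<le> i0 + j0"
        then have "i0 + j0 - i < j0" by arith
        then show ?thesis using jlt by simp
      qed
    qed
    then show ?thesis using eq i0 j0 by simp
  qed
  then have "\<not> i0 + j0 < N" using Pev by blast
  then have "i0 = degree G'" "j0 = degree H'" using i0le j0le dsum dG' dH' by auto
  then have "even (coeff G' 0)" "even (coeff H' 0)"
    using ilt jlt dG dH dG' dH' by auto
  moreover have "coeff P 0 = coeff G' 0 * coeff H' 0" by (simp add: PGH coeff_mult)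
  ultimately have "4 dvd coeff P 0" by (auto elim!: evenE)
  then show False using Pc0 by simp
qed

lemma LI_aux: "degree p = d \<Longrightarrow> d < N \<Longrightarrow> p \<noteq> 0 \<Longrightarrow> poly (cp p) z \<noteq> 0"
proof (induction d arbitrary: p rule: less_induct)
  case (less d)
  show ?case
  proof
    assume pz: "poly (cp p) z = 0"
    have "d \<ge> 1"
    proof (rule ccontr)
      assume "\<not> d \<ge> 1"
      then have "degree p = 0" using less by simp
      then obtain c where "p = [:c:]" by (metis degree_eq_zeroE)
      then show False using pz less.prems(3) by simp
    qed
    obtain A R where AR: "pseudo_divmod F p = (A, R)" by (cases "pseudo_divmod F p")
    define c where "c = coeff p (degree p) ^ (Suc (degree F) - degree p)"
    have c0: "c \<noteq> 0" using less.prems(3) by (simp add: c_def)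
    have eq: "smult c F = p * A + R" and R: "R = 0 \<or> degree R < degree p"
      using pseudo_divmod[OF less.prems(3) AR] by (simp_all add: c_def)
    have "poly (cp R) z = 0"
    proof -
      have "poly (cp (smult c F)) z = poly (cp (p * A + R)) z" using eq by simp
      then show ?thesis using F_root[OF z_N] pz by simp
    qed
    then have R0: "R = 0" using R less.IH less.prems by auto
    have cF: "content F = 1"
    proof -
      have "content F dvd coeff F N" by simp
      then have "content F dvd 1" using coeff_F_N by simp
      then have "normalize (content F) = 1" by (simp add: is_unit_normalize)
      then show ?thesis by (simp only: normalize_content)
    qed
    have ppF: "primitive_part F = F"
      using content_times_primitive_part[of F] cF by simp
    have "primitive_part (smult c F) = primitive_part (p * A)" using eq R0 by simp
    then have X: "smult (sgn c) F = primitive_part p * primitive_part A"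
      using ppF by (simp add: primitive_part_smult primitive_part_mult)
    have sc: "sgn c * sgn c = (1::int)" using c0 by (cases "c > 0") auto
    have "F = smult (sgn c) (smult (sgn c) F)" using sc by (simp add: smult_smult)
    also have "\<dots> = smult (sgn c) (primitive_part p) * primitive_part A"
      using X by (simp add: mult_smult_left)
    finally have FGA: "F = smult (sgn c) (primitive_part p) * primitive_part A" .
    have dG0: "degree (smult (sgn c) (primitive_part p)) = d"
      using c0 less.prems by (simp add: sgn_0_0)
    have "primitive_part A \<noteq> 0"
    proof
      assume "primitive_part A = 0"
      then have "F = 0" using FGA by simp
      then show False using degree_F N_pos by simp
    qed
    moreover have "smult (sgn c) (primitive_part p) \<noteq> 0"
    proof
      assume "smult (sgn c) (primitive_part p) = 0"
      then have "degree (smult (sgn c) (primitive_part p)) = 0" by (simp only: degree_0)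
      then show False using dG0 \<open>d \<ge> 1\<close> by simp
    qed
    ultimately have "degree F = d + degree (primitive_part A)"
      using FGA dG0 by (metis degree_mult_eq)
    then have "degree (primitive_part A) \<ge> 1" using degree_F less.prems by simp
    then show False using no_factor[OF FGA] dG0 \<open>d \<ge> 1\<close> by simp
  qed
qed

lemma LI: "degree p < N \<Longrightarrow> poly (cp p) z = 0 \<Longrightarrow> p = 0"
  using LI_aux by blast


lemma F_ne0: "F \<noteq> 0" using degree_F N_pos by auto

lemma divF: "\<exists>q r. p = F * q + r \<and> degree r < N"
proof -
  obtain q r where qr: "pseudo_divmod p F = (q, r)" by (cases "pseudo_divmod p F")
  from pseudo_divmod[OF F_ne0 qr] degree_F coeff_F_N
  have "p = F * q + r" "r = 0 \<or> degree r < N" by simp_all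
  then show ?thesis using N_pos by (metis degree_0)
qed

lemma vanish_F: "poly (cp p) z = 0 \<Longrightarrow> \<exists>q. p = F * q"
proof -
  assume h: "poly (cp p) z = 0"
  obtain q r where qr: "p = F * q + r" "degree r < N" using divF by blast
  have "poly (cp r) z = 0" using h F_root[OF z_N] by (simp add: qr)
  then have "r = 0" using LI qr(2) by blast
  then show ?thesis using qr by auto
qed

lemma galois: "poly (cp p) z = 0 \<Longrightarrow> w ^ N = -1 \<Longrightarrow> poly (cp p) w = 0"
  using vanish_F F_root by fastforce

lemma ev_wd: "poly (cp p) z = poly (cp q) z \<Longrightarrow> even (poly p 1 - poly q 1)"
proof -
  assume "poly (cp p) z = poly (cp q) z"
  then have "poly (cp (p - q)) z = 0" by simp
  then obtain s where "p - q = F * s" using vanish_F by blast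
  then have "poly p 1 - poly q 1 = 2 * poly s 1"
    by (metis poly_F_1 poly_diff poly_mult)
  then show ?thesis by simp
qed

definition Zz :: "complex set" where "Zz = {\<alpha>. \<exists>p. \<alpha> = poly (cp p) z}"
definition EO :: "complex \<Rightarrow> bool" where "EO \<alpha> \<longleftrightarrow> (\<exists>p. \<alpha> = poly (cp p) z \<and> odd (poly p 1))"
definition piz :: complex where "piz = 1 - z"

lemma Zz_add: assumes "\<alpha> \<in> Zz" "\<beta> \<in> Zz" shows "\<alpha> + \<beta> \<in> Zz"
proof -
  obtain p q where "\<alpha> = poly (cp p) z" "\<beta> = poly (cp q) z" using assms unfolding Zz_def by blast
  then have "\<alpha> + \<beta> = poly (cp (p + q)) z" by simp
  then show ?thesis unfolding Zz_def by blast
qed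
lemma Zz_diff: assumes "\<alpha> \<in> Zz" "\<beta> \<in> Zz" shows "\<alpha> - \<beta> \<in> Zz"
proof -
  obtain p q where "\<alpha> = poly (cp p) z" "\<beta> = poly (cp q) z" using assms unfolding Zz_def by blast
  then have "\<alpha> - \<beta> = poly (cp (p - q)) z" by simp
  then show ?thesis unfolding Zz_def by blast
qed
lemma Zz_mult: assumes "\<alpha> \<in> Zz" "\<beta> \<in> Zz" shows "\<alpha> * \<beta> \<in> Zz"
proof -
  obtain p q where "\<alpha> = poly (cp p) z" "\<beta> = poly (cp q) z" using assms unfolding Zz_def by blast
  then have "\<alpha> * \<beta> = poly (cp (p * q)) z" by simp
  then show ?thesis unfolding Zz_def by blast
qed
lemma Zz_of_int: "of_int c \<in> Zz"
  unfolding Zz_def by (auto intro!: exI[of _ "[:c:]"])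
lemma Zz_1: "1 \<in> Zz" using Zz_of_int[of 1] by simp
lemma Zz_z: "z \<in> Zz"
  unfolding Zz_def by (auto intro!: exI[of _ "[:0,1:]"])
lemma Zz_pow: "\<alpha> \<in> Zz \<Longrightarrow> \<alpha> ^ n \<in> Zz"
  by (induction n) (simp_all add: Zz_1 Zz_mult)
lemma Zz_sum: "(\<And>i. i \<in> I \<Longrightarrow> f i \<in> Zz) \<Longrightarrow> sum f I \<in> Zz"
proof (induction I rule: infinite_finite_induct)
  case (infinite A) then show ?case using Zz_of_int[of 0] by simp
next
  case empty then show ?case using Zz_of_int[of 0] by simp
next
  case (insert x F) then show ?case by (simp add: Zz_add)
qed

lemma EO_odd: assumes "EO \<alpha>" "\<alpha> = poly (cp q) z" shows "odd (poly q 1)"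
proof -
  obtain p where p: "\<alpha> = poly (cp p) z" "odd (poly p 1)" using assms(1) unfolding EO_def by blast
  have "even (poly p 1 - poly q 1)" using ev_wd[of p q] p(1) assms(2) by argo
  then show ?thesis using p(2) by simp
qed

lemma EO_Zz: "EO \<alpha> \<Longrightarrow> \<alpha> \<in> Zz" unfolding EO_def Zz_def by blast

lemma EO_ne0: "EO \<alpha> \<Longrightarrow> \<alpha> \<noteq> 0"
proof
  assume "EO \<alpha>" "\<alpha> = 0"
  then have "odd (poly (0::int poly) 1)" using EO_odd[of \<alpha> 0] by simp
  then show False by simp
qed

lemma EO_mult: assumes "EO \<alpha>" "EO \<beta>" shows "EO (\<alpha> * \<beta>)"
proof -
  obtain p q where "\<alpha> = poly (cp p) z" "odd (poly p 1)" "\<beta> = poly (cp q) z" "odd (poly q 1)"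
    using assms unfolding EO_def by blast
  then have "\<alpha> * \<beta> = poly (cp (p * q)) z" "odd (poly (p * q) 1)" by simp_all
  then show ?thesis unfolding EO_def by blast
qed

lemma EO_1: "EO 1"
proof -
  have "(1::complex) = poly (cp 1) z" "odd (poly (1::int poly) 1)" by simp_all
  then show ?thesis unfolding EO_def by blast
qed

lemma EO_pow: "EO \<alpha> \<Longrightarrow> EO (\<alpha> ^ n)"
  by (induction n) (simp_all add: EO_1 EO_mult)

lemma piz_rep: "piz = poly (cp [:1,-1:]) z" by (simp add: piz_def)

lemma Zz_piz: "piz \<in> Zz" unfolding Zz_def using piz_rep by blast

lemma not_EO_piz: "0 < s \<Longrightarrow> \<gamma> \<in> Zz \<Longrightarrow> \<not> EO (piz ^ s * \<gamma>)"
proof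
  assume s: "0 < s" and g: "\<gamma> \<in> Zz" and e: "EO (piz ^ s * \<gamma>)"
  obtain g' where g': "\<gamma> = poly (cp g') z" using g unfolding Zz_def by blast
  have "piz ^ s * \<gamma> = poly (cp ([:1,-1:] ^ s * g')) z" by (simp add: g' piz_def)
  from EO_odd[OF e this] show False using s by simp
qed

lemma piz_ne0: "piz \<noteq> 0" using z_ne_1 by (simp add: piz_def)

lemma two_eq: "\<exists>S\<in>Zz. 2 = piz * S"
proof -
  have "1 - z ^ N = (1 - z) * (\<Sum>i<N. z ^ i)" by (rule one_diff_power_eq)
  then have "2 = piz * (\<Sum>i<N. z ^ i)" by (simp add: z_N piz_def)
  moreover have "(\<Sum>i<N. z ^ i) \<in> Zz" by (intro Zz_sum Zz_pow Zz_z)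
  ultimately show ?thesis by blast
qed

lemma div_piz: "\<alpha> \<in> Zz \<Longrightarrow> \<not> EO \<alpha> \<Longrightarrow> \<exists>\<alpha>'\<in>Zz. \<alpha> = piz * \<alpha>'"
proof -
  assume a: "\<alpha> \<in> Zz" and ne: "\<not> EO \<alpha>"
  obtain p where p: "\<alpha> = poly (cp p) z" using a unfolding Zz_def by blast
  have "even (poly p 1)" using ne p unfolding EO_def by blast
  then obtain t where t: "poly p 1 = 2 * t" by blast
  have "poly (p - [:2 * t:]) 1 = 0" using t by simp
  then obtain q where q: "p - [:2 * t:] = [:-1,1:] * q" using poly_eq_0_iff_dvd[of "p - [:2*t:]" 1] by auto
  obtain S where S: "S \<in> Zz" "2 = piz * S" using two_eq by blast
  have "\<alpha> = poly (cp (p - [:2 * t:])) z + 2 * of_int t" by (simp add: p)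
  also have "\<dots> = (z - 1) * poly (cp q) z + 2 * of_int t"
  proof -
    have "poly (cp (p - [:2 * t:])) z = (z - 1) * poly (cp q) z"
      unfolding q by (simp add: algebra_simps)
    then show ?thesis by simp
  qed
  also have "\<dots> = piz * (of_int t * S - poly (cp q) z)"
  proof -
    have "piz * (of_int t * S - poly (cp q) z) = of_int t * (piz * S) - piz * poly (cp q) z"
      by (simp add: algebra_simps)
    also have "\<dots> = of_int t * 2 - (1 - z) * poly (cp q) z" by (simp only: S(2) piz_def)
    finally show ?thesis by (simp add: algebra_simps)
  qed
  finally have "\<alpha> = piz * (of_int t * S - poly (cp q) z)" .
  moreover have "of_int t * S - poly (cp q) z \<in> Zz"
    using S(1) by (intro Zz_diff Zz_mult Zz_of_int) (auto simp: Zz_def)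
  ultimately show ?thesis by blast
qed

lemma pi_N: "\<exists>\<epsilon>\<in>Zz. EO \<epsilon> \<and> piz ^ N = 2 * \<epsilon>"
proof -
  obtain E where E: "[:1,-1:]^N = (1::int poly) + monom 1 N + smult 2 E"
    using pow_expand[of m] by (auto simp: N_def)
  have "poly (cp ([:1,-1:]^N)) z = poly (cp (1 + monom 1 N + smult 2 E)) z" using E by simp
  then have e1: "piz ^ N = 2 * poly (cp E) z" by (simp add: piz_def poly_monom z_N)
  have "poly ([:1,-1:]^N) (1::int) = poly (1 + monom 1 N + smult 2 E) 1" using E by simp
  then have "0 = 2 + 2 * poly E 1" using N_pos by (simp add: poly_monom zero_power)
  then have "poly E 1 = -1" by simp
  then have "EO (poly (cp E) z)" unfolding EO_def by auto
  then show ?thesis using e1 EO_Zz by blast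
qed

lemma reduce: "\<alpha> \<in> Zz \<Longrightarrow> \<exists>p. degree p < N \<and> \<alpha> = poly (cp p) z"
proof -
  assume "\<alpha> \<in> Zz"
  then obtain p where p: "\<alpha> = poly (cp p) z" unfolding Zz_def by blast
  obtain q r where qr: "p = F * q + r" "degree r < N" using divF by blast
  have "\<alpha> = poly (cp r) z" using p F_root[OF z_N] by (simp add: qr)
  then show ?thesis using qr by blast
qed

lemma val: "\<alpha> \<in> Zz \<Longrightarrow> \<alpha> \<noteq> 0 \<Longrightarrow> \<exists>v \<gamma>. \<gamma> \<in> Zz \<and> EO \<gamma> \<and> \<alpha> = piz ^ v * \<gamma>"
proof (rule ccontr)
  assume a: "\<alpha> \<in> Zz" and a0: "\<alpha> \<noteq> 0" and H: "\<not> (\<exists>v \<gamma>. \<gamma> \<in> Zz \<and> EO \<gamma> \<and> \<alpha> = piz ^ v * \<gamma>)"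
  have all: "\<exists>\<gamma>\<in>Zz. \<alpha> = piz ^ v * \<gamma>" for v
  proof (induction v)
    case 0 then show ?case using a by auto
  next
    case (Suc v)
    then obtain \<gamma> where g: "\<gamma> \<in> Zz" "\<alpha> = piz ^ v * \<gamma>" by blast
    then have "\<not> EO \<gamma>" using H by blast
    then obtain \<gamma>' where "\<gamma>' \<in> Zz" "\<gamma> = piz * \<gamma>'" using div_piz g(1) by blast
    then show ?case using g(2) by (auto simp: mult_ac)
  qed
  obtain \<epsilon> where eps: "\<epsilon> \<in> Zz" "piz ^ N = 2 * \<epsilon>" using pi_N by blast
  have two: "\<exists>\<beta>\<in>Zz. \<alpha> = 2 ^ t * \<beta>" for t
  proof -
    obtain \<gamma> where g: "\<gamma> \<in> Zz" "\<alpha> = piz ^ (N * t) * \<gamma>" using all by blast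
    have "\<alpha> = 2 ^ t * (\<epsilon> ^ t * \<gamma>)"
      using g(2) eps(2) by (simp add: power_mult power_mult_distrib)
    moreover have "\<epsilon> ^ t * \<gamma> \<in> Zz" using eps(1) g(1) by (intro Zz_mult Zz_pow)
    ultimately show ?thesis by blast
  qed
  obtain p where p: "degree p < N" "\<alpha> = poly (cp p) z" using reduce a by blast
  have dv: "2 ^ t dvd coeff p i" for t i
  proof -
    obtain \<beta> where b: "\<beta> \<in> Zz" "\<alpha> = 2 ^ t * \<beta>" using two by blast
    obtain q where q: "degree q < N" "\<beta> = poly (cp q) z" using reduce b(1) by blast
    have "poly (cp (p - smult (2 ^ t) q)) z = 0" using p(2) b(2) q(2) by simp
    moreover have "degree (p - smult (2 ^ t) q) < N"
      using p(1) q(1) by (intro degree_diff_less) (simp_all add: degree_smult_le le_less_trans)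
    ultimately have "p - smult (2 ^ t) q = 0" using LI by blast
    then have "p = smult (2 ^ t) q" by simp
    then show ?thesis by simp
  qed
  have "coeff p i = 0" for i
  proof (rule ccontr)
    assume c: "coeff p i \<noteq> 0"
    have "\<bar>(2::int) ^ nat \<bar>coeff p i\<bar>\<bar> \<le> \<bar>coeff p i\<bar>"
      using dvd_imp_le_int[OF c dv] by blast
    moreover have "\<bar>coeff p i\<bar> < 2 ^ nat \<bar>coeff p i\<bar>"
    proof -
      have "nat \<bar>coeff p i\<bar> < 2 ^ nat \<bar>coeff p i\<bar>" by (rule less_exp)
      then have "int (nat \<bar>coeff p i\<bar>) < int (2 ^ nat \<bar>coeff p i\<bar>)" by linarith
      then show ?thesis by simp
    qed
    ultimately show False by simp
  qed
  then have "p = 0" by (simp add: poly_eq_iff)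
  then show False using p(2) a0 by simp
qed

lemma cnj_rep: "cnj (poly (cp g) z) = poly (cp (pcompose g (monom 1 (2*N-1)))) z"
  by (simp add: cnj_poly_cp cnj_z poly_cp_pcompose poly_monom)

lemma Zz_cnj: "\<alpha> \<in> Zz \<Longrightarrow> cnj \<alpha> \<in> Zz"
  unfolding Zz_def using cnj_rep by blast

lemma EO_cnj: "EO \<alpha> \<Longrightarrow> EO (cnj \<alpha>)"
proof -
  assume "EO \<alpha>"
  then obtain p where p: "\<alpha> = poly (cp p) z" "odd (poly p 1)" unfolding EO_def by blast
  have "poly (pcompose p (monom 1 (2*N-1))) 1 = poly p 1" by (simp add: poly_pcompose poly_monom)
  then show ?thesis unfolding EO_def using p cnj_rep by metis
qed

lemma z_cnj_z: "z * cnj z = 1" using complex_norm_square[of z] norm_z by simp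

lemma cnj_piz: "\<exists>u. u \<in> Zz \<and> EO u \<and> cnj piz = piz * u"
proof -
  have "cnj piz = piz * (- cnj z)" using z_cnj_z by (simp add: piz_def algebra_simps)
  moreover have "EO (- cnj z)"
  proof -
    have "- cnj z = poly (cp (- monom 1 (2*N-1))) z" by (simp add: cnj_z poly_monom)
    moreover have "odd (poly (- monom 1 (2*N-1)) (1::int))" by (simp add: poly_monom)
    ultimately show ?thesis unfolding EO_def by blast
  qed
  ultimately show ?thesis using EO_Zz by blast
qed


lemma geo0: "(x::complex) \<noteq> 1 \<Longrightarrow> x ^ N = 1 \<Longrightarrow> (\<Sum>t<N. x ^ t) = 0"
  by (simp add: geometric_sum)

lemma not_N_dvd: assumes "x < N" "y < N" "x \<noteq> y" shows "\<not> (N dvd (x + (2*N-1) * y))"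
proof
  define E where "E = x + (2*N-1) * y"
  assume d: "N dvd (x + (2*N-1) * y)"
  then have E0: "E mod N = 0" by (simp add: E_def)
  have "(2*N-1) * y + y = 2*N*y" using N_pos by (simp add: algebra_simps)
  then have eq: "E + y = x + N * (2 * y)" by (simp add: E_def algebra_simps)
  have "(E + y) mod N = (E mod N + y) mod N" by (simp only: mod_add_left_eq)
  also have "\<dots> = y" using E0 assms(2) by simp
  finally have 1: "(E + y) mod N = y" .
  have "(x + N * (2 * y)) mod N = x" using assms(1) by simp
  then show False using 1 eq assms(3) by simp
qed

lemma orth: assumes "r < N" "s < N"
  shows "(\<Sum>t<N. (z^(2*t+1))^r * cnj ((z^(2*t+1))^s)) = (if r = s then of_nat N else 0)"
proof -
  define e where "e = r + (2*N-1)* s"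
  have tm: "(z^(2*t+1))^r * cnj ((z^(2*t+1))^s) = (z^e)^(2*t+1)" for t
  proof -
    have a: "(z^(2*t+1))^r = z^((2*t+1)*r)" by (simp only: power_mult)
    have b: "cnj ((z^(2*t+1))^s) = z^((2*N-1)*((2*t+1)* s))"
      by (simp only: complex_cnj_power power_mult[symmetric] cnj_z)
    have "(z^(2*t+1))^r * cnj ((z^(2*t+1))^s) = z^((2*t+1)*r + (2*N-1)*((2*t+1)* s))"
      unfolding a b by (simp only: power_add[symmetric])
    also have "(2*t+1)*r + (2*N-1)*((2*t+1)* s) = e * (2*t+1)"
    proof -
      have "\<And>M::nat. (2*t+1)*r + M*((2*t+1)* s) = (r + M * s) * (2*t+1)" by (simp add: algebra_simps)
      then show ?thesis by (simp only: e_def)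
    qed
    finally show ?thesis by (simp only: power_mult)
  qed
  have S: "(\<Sum>t<N. (z^(2*t+1))^r * cnj ((z^(2*t+1))^s)) = (\<Sum>t<N. (z^e)^(2*t+1))"
    using tm by (intro sum.cong) auto
  show ?thesis
  proof (cases "r = s")
    case True
    have "z ^ e = 1"
    proof -
      have "e = 2 * N * s" using True N_pos unfolding e_def
        by (metis Suc_diff_1 add.commute mult_Suc mult_pos_pos zero_less_numeral mult.assoc)
      then show ?thesis by (simp add: z_pow_eq_1)
    qed
    then show ?thesis using True S by simp
  next
    case False
    define x where "x = z ^ e"
    have x2: "x^2 \<noteq> 1"
    proof
      assume "x^2 = 1"
      then have "z ^ (e * 2) = 1" by (simp add: x_def power_mult)
      then have "2 * N dvd e * 2" by (simp add: z_pow_eq_1)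
      then have "N dvd e" by simp
      then show False using not_N_dvd[OF assms False] by (simp add: e_def)
    qed
    have x2N: "(x^2)^N = 1"
    proof -
      have "(x^2)^N = (z ^ (2 * N)) ^ e" by (simp add: x_def power_mult[symmetric] mult_ac)
      then show ?thesis by (simp add: z_2N)
    qed
    have "(\<Sum>t<N. (z^(2*t+1))^r * cnj ((z^(2*t+1))^s)) = (\<Sum>t<N. x * (x^2)^t)"
      unfolding S x_def by (intro sum.cong refl) (simp add: power_mult[symmetric] mult_ac)
    also have "\<dots> = x * (\<Sum>t<N. (x^2)^t)" by (simp add: sum_distrib_left)
    also have "\<dots> = 0" using geo0[OF x2 x2N] by simp
    finally show ?thesis using False by simp
  qed
qed

lemma poly_sum_N: "degree p < N \<Longrightarrow> poly (cp p) w = (\<Sum>r<N. of_int (coeff p r) * w ^ r)"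
proof -
  assume d: "degree p < N"
  have d': "degree (cp p) = degree p" unfolding cp_def by (rule degree_map_poly) simp
  have "poly (cp p) w = (\<Sum>i\<le>degree (cp p). coeff (cp p) i * w^i)" by (rule poly_altdef)
  also have "\<dots> = (\<Sum>i<N. coeff (cp p) i * w^i)"
    by (rule sum.mono_neutral_left) (use d d' in \<open>auto simp: coeff_eq_0 le_degree\<close>)
  finally show ?thesis by simp
qed

lemma single_sq:
  fixes b :: "nat \<Rightarrow> int"
  assumes "(\<Sum>r<N. (b r)^2) = 1"
  shows "\<exists>r0<N. (b r0 = 1 \<or> b r0 = -1) \<and> (\<forall>r<N. r \<noteq> r0 \<longrightarrow> b r = 0)"
proof -
  have "\<exists>r0<N. b r0 \<noteq> 0"
  proof (rule ccontr)
    assume "\<not> (\<exists>r0<N. b r0 \<noteq> 0)"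
    then have "(\<Sum>r<N. (b r)^2) = 0" by simp
    then show False using assms by simp
  qed
  then obtain r0 where r0: "r0 < N" "b r0 \<noteq> 0" by blast
  have sp: "(\<Sum>r<N. (b r)^2) = (b r0)^2 + (\<Sum>r\<in>{..<N}-{r0}. (b r)^2)"
    using r0 by (simp add: sum.remove)
  have rest: "(\<Sum>r\<in>{..<N}-{r0}. (b r)^2) \<ge> 0" by (simp add: sum_nonneg)
  have "(b r0)^2 > 0" using r0 by simp
  then have b1: "(b r0)^2 = 1" and r2: "(\<Sum>r\<in>{..<N}-{r0}. (b r)^2) = 0"
    using sp assms rest by linarith+
  have "\<forall>r\<in>{..<N}-{r0}. (b r)^2 = 0"
    using r2 by (subst (asm) sum_nonneg_eq_0_iff) auto
  then have "\<forall>r<N. r \<noteq> r0 \<longrightarrow> b r = 0" by auto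
  moreover have "b r0 = 1 \<or> b r0 = -1" using b1 by (simp add: power2_eq_1_iff)
  ultimately show ?thesis using r0 by blast
qed

lemma unit_circle: assumes "\<beta> \<in> Zz" "\<beta> * cnj \<beta> = 1"
  shows "\<exists>c r. r < N \<and> (c = 1 \<or> c = -1) \<and> \<beta> = of_int c * z ^ r"
proof -
  obtain p where p: "degree p < N" "\<beta> = poly (cp p) z" using reduce assms(1) by blast
  define b where "b = coeff p"
  define w where "w t = z^(2*t+1)" for t
  define Q where "Q = p * pcompose p (monom 1 (2*N-1)) - 1"
  have Qz: "poly (cp Q) z = 0"
    using assms(2) p(2) cnj_rep[of p] by (simp add: Q_def poly_cp_pcompose)
  have wN: "(w t)^N = -1" for t
  proof -
    have "(w t)^N = (z^N)^(2*t+1)" unfolding w_def by (simp only: power_mult[symmetric] mult.commute)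
    then show ?thesis by (simp add: z_N)
  qed
  have wc: "(w t)^(2*N-1) = cnj (w t)" for t
    unfolding w_def complex_cnj_power cnj_z by (simp only: power_mult[symmetric] mult.commute)
  have one: "poly (cp p) (w t) * cnj (poly (cp p) (w t)) = 1" for t
  proof -
    have "poly (cp Q) (w t) = 0" using galois[OF Qz wN] .
    then show ?thesis using wc[of t] by (simp add: Q_def poly_cp_pcompose poly_monom cnj_poly_cp)
  qed
  have "(\<Sum>t<N. poly (cp p) (w t) * cnj (poly (cp p) (w t))) = of_nat N"
    using one by simp
  moreover have "(\<Sum>t<N. poly (cp p) (w t) * cnj (poly (cp p) (w t))) =
      (\<Sum>t<N. \<Sum>r<N. \<Sum>s<N. of_int (b r * b s) * ((w t)^r * cnj ((w t)^s)))"
  proof (rule sum.cong[OF refl])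
    fix t
    show "poly (cp p) (w t) * cnj (poly (cp p) (w t)) =
      (\<Sum>r<N. \<Sum>s<N. of_int (b r * b s) * ((w t)^r * cnj ((w t)^s)))"
      by (simp add: poly_sum_N[OF p(1)] b_def sum_product cnj_sum mult_ac)
  qed
  moreover have "(\<Sum>t<N. \<Sum>r<N. \<Sum>s<N. of_int (b r * b s) * ((w t)^r * cnj ((w t)^s))) =
      (\<Sum>r<N. \<Sum>s<N. \<Sum>t<N. of_int (b r * b s) * ((w t)^r * cnj ((w t)^s)))"
  proof -
    have "(\<Sum>t<N. \<Sum>r<N. \<Sum>s<N. of_int (b r * b s) * ((w t)^r * cnj ((w t)^s))) =
      (\<Sum>r<N. \<Sum>t<N. \<Sum>s<N. of_int (b r * b s) * ((w t)^r * cnj ((w t)^s)))"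
      by (rule sum.swap)
    also have "\<dots> = (\<Sum>r<N. \<Sum>s<N. \<Sum>t<N. of_int (b r * b s) * ((w t)^r * cnj ((w t)^s)))"
      by (rule sum.cong[OF refl], rule sum.swap)
    finally show ?thesis .
  qed
  moreover have "(\<Sum>r<N. \<Sum>s<N. \<Sum>t<N. of_int (b r * b s) * ((w t)^r * cnj ((w t)^s))) =
      (\<Sum>r<N. of_int ((b r)^2) * of_nat N)"
  proof (rule sum.cong[OF refl])
    fix r assume r: "r \<in> {..<N}"
    have "(\<Sum>s<N. \<Sum>t<N. of_int (b r * b s) * ((w t)^r * cnj ((w t)^s))) =
        (\<Sum>s<N. of_int (b r * b s) * (if r = s then of_nat N else 0))"
    proof (rule sum.cong[OF refl])
      fix s assume s: "s \<in> {..<N}"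
      show "(\<Sum>t<N. of_int (b r * b s) * ((w t)^r * cnj ((w t)^s))) =
          of_int (b r * b s) * (if r = s then of_nat N else 0)"
        using orth[of r s] r s by (simp add: sum_distrib_left[symmetric] w_def)
    qed
    also have "\<dots> = of_int ((b r)^2) * of_nat N"
      using r by (simp add: if_distrib sum.delta power2_eq_square cong: if_cong)
    finally show "(\<Sum>s<N. \<Sum>t<N. of_int (b r * b s) * ((w t)^r * cnj ((w t)^s))) =
        of_int ((b r)^2) * of_nat N" .
  qed
  ultimately have "(\<Sum>r<N. of_int ((b r)^2) * of_nat N) = (of_nat N :: complex)" by simp
  then have "of_int (\<Sum>r<N. (b r)^2) * of_nat N = (of_nat N :: complex)"
    by (simp add: sum_distrib_right)
  then have "of_int (\<Sum>r<N. (b r)^2) = (1::complex)" using N_pos by simp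
  then have "(\<Sum>r<N. (b r)^2) = 1" by (simp only: of_int_eq_1_iff)
  from single_sq[OF this] obtain r0 where r0: "r0 < N" "b r0 = 1 \<or> b r0 = -1"
    "\<forall>r<N. r \<noteq> r0 \<longrightarrow> b r = 0" by blast
  have "\<beta> = (\<Sum>r<N. of_int (b r) * z ^ r)" using p poly_sum_N b_def by simp
  also have "\<dots> = of_int (b r0) * z ^ r0 + (\<Sum>r\<in>{..<N}-{r0}. of_int (b r) * z ^ r)"
    using r0(1) by (simp add: sum.remove)
  also have "(\<Sum>r\<in>{..<N}-{r0}. of_int (b r) * z ^ r) = 0"
    using r0(3) by (intro sum.neutral) auto
  finally show ?thesis using r0 by auto
qed

lemma main_nt: assumes "\<alpha> \<in> Zz" "\<alpha> * cnj \<alpha> = 2 ^ (2*h)"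
  shows "\<exists>c r. r < N \<and> (c = 1 \<or> c = -1) \<and> \<alpha> = 2 ^ h * of_int c * z ^ r"
proof -
  have a0: "\<alpha> \<noteq> 0" using assms(2) by auto
  obtain v \<gamma> where g: "\<gamma> \<in> Zz" "EO \<gamma>" "\<alpha> = piz ^ v * \<gamma>" using val[OF assms(1) a0] by blast
  obtain \<epsilon> where eps: "\<epsilon> \<in> Zz" "EO \<epsilon>" "piz ^ N = 2 * \<epsilon>" using pi_N by blast
  obtain u where u: "u \<in> Zz" "EO u" "cnj piz = piz * u" using cnj_piz by blast
  define L where "L = u ^ v * (\<gamma> * cnj \<gamma>) * \<epsilon> ^ (2*h)"
  have EL: "EO L" unfolding L_def using u g eps by (intro EO_mult EO_pow EO_cnj) auto
  have LZ: "L \<in> Zz" using EO_Zz[OF EL] .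
  have eq1: "piz ^ (2* v) * L = piz ^ (N * (2*h))"
  proof -
    have "piz ^ (2* v) * L = (\<alpha> * cnj \<alpha>) * \<epsilon> ^ (2*h)"
    proof -
      have pp: "piz ^ (2 * v) = piz ^ v * piz ^ v" by (simp add: mult_2 power_add)
      show ?thesis unfolding pp by (simp add: L_def g(3) u(3) power_mult_distrib mult_ac)
    qed
    also have "\<dots> = (2 * \<epsilon>) ^ (2*h)" using assms(2) by (simp add: power_mult_distrib)
    also have "\<dots> = piz ^ (N * (2*h))" using eps(3) by (simp add: power_mult)
    finally show ?thesis .
  qed
  have vN: "v = N * h"
  proof (rule ccontr)
    assume "v \<noteq> N * h"
    then have "2* v < N*(2*h) \<or> 2* v > N*(2*h)" by auto
    then show False
    proof
      assume lt: "2* v < N*(2*h)"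
      define d where "d = N*(2*h) - 2* v"
      have "piz ^ (2* v) * L = piz ^ (2* v) * (piz ^ d * 1)"
        using eq1 lt by (simp add: d_def power_add[symmetric])
      then have "L = piz ^ d * 1" using piz_ne0 by simp
      moreover have "0 < d" using lt by (simp add: d_def)
      ultimately show False using not_EO_piz[OF _ Zz_1] EL by metis
    next
      assume gt: "2* v > N*(2*h)"
      define d where "d = 2* v - N*(2*h)"
      have "piz ^ (N*(2*h)) * (piz ^ d * L) = piz ^ (N*(2*h)) * 1"
        using eq1 gt by (simp add: d_def power_add[symmetric] mult.assoc[symmetric])
      then have "piz ^ d * L = 1" using piz_ne0 by simp
      moreover have "0 < d" using gt by (simp add: d_def)
      ultimately show False using not_EO_piz[OF _ LZ] EO_1 by metis
    qed
  qed
  define \<beta> where "\<beta> = \<epsilon> ^ h * \<gamma>"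
  have aB: "\<alpha> = 2 ^ h * \<beta>"
    using g(3) eps(3) vN by (simp add: \<beta>_def power_mult power_mult_distrib)
  have BZ: "\<beta> \<in> Zz" unfolding \<beta>_def using eps g by (intro Zz_mult Zz_pow) auto
  have e2: "(2::complex)^(2*h) = 2^h * 2^h" by (simp add: mult_2 power_add)
  have "(2 ^ h * \<beta>) * cnj (2 ^ h * \<beta>) = (2^h * 2^h) * (\<beta> * cnj \<beta>)" by (simp add: mult_ac)
  then have "(2^h * 2^h) * (\<beta> * cnj \<beta>) = (2^h * 2^h :: complex) * 1" using assms(2) aB e2 by simp
  then have "\<beta> * cnj \<beta> = 1" by (subst (asm) mult_left_cancel) simp_all
  from unit_circle[OF BZ this] obtain c r where "r < N" "c = 1 \<or> c = -1" "\<beta> = of_int c * z ^ r" by blast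
  then show ?thesis using aB by (metis mult.assoc)
qed

lemma LI_sum: assumes "(\<Sum>r<N. of_int (d r) * z ^ r) = 0" "r < N" shows "d r = 0"
proof -
  define p where "p = (\<Sum>i<N. monom (d i) i)"
  have cp: "coeff p i = (if i < N then d i else 0)" for i
    by (simp add: p_def coeff_sum coeff_monom)
  have dp: "degree p < N"
  proof (rule ccontr)
    assume "\<not> degree p < N"
    then have "coeff p (degree p) = 0" using cp by simp
    then have "p = 0" by simp
    then show False using \<open>\<not> degree p < N\<close> N_pos by simp
  qed
  have "poly (cp p) z = (\<Sum>i<N. of_int (d i) * z ^ i)"
    using poly_sum_N[OF dp] cp by simp
  then have "p = 0" using LI dp assms(1) by simp
  then show ?thesis using cp[of r] assms(2) by simp
qed

end

lemma sgn_b_xor: "sgn_b (p \<noteq> q) = sgn_b p * sgn_b q"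
  by (simp add: sgn_b_def)
lemma sgn_b_sq: "sgn_b p * sgn_b p = 1"
  by (simp add: sgn_b_def)
lemma abs_sgn_b: "\<bar>sgn_b p\<bar> = 1"
  by (simp add: sgn_b_def)

lemma prod_sgn: "finite S \<Longrightarrow> (\<Prod>i\<in>S. sgn_b (P i)) = sgn_b (odd (card {i\<in>S. P i}))"
proof (induction S rule: finite_induct)
  case empty then show ?case by (simp add: sgn_b_def)
next
  case (insert x F)
  have fin: "finite {i\<in>F. P i}" using insert by simp
  show ?case
  proof (cases "P x")
    case True
    then have "{i\<in>insert x F. P i} = insert x {i\<in>F. P i}" by auto
    moreover have "x \<notin> {i\<in>F. P i}" using insert by simp
    ultimately have "card {i\<in>insert x F. P i} = Suc (card {i\<in>F. P i})" using fin by simp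
    then show ?thesis using insert True by (simp add: sgn_b_def)
  next
    case False
    then have "{i\<in>insert x F. P i} = {i\<in>F. P i}" by auto
    then show ?thesis using insert False by (simp add: sgn_b_def)
  qed
qed

lemma hadamard: "finite M \<Longrightarrow>
  (\<Sum>S\<in>Pow M. \<Prod>i\<in>S. sgn_b (P i)) = (if \<forall>i\<in>M. \<not> P i then 2 ^ card M else 0)"
proof (induction M rule: finite_induct)
  case empty then show ?case by simp
next
  case (insert x F)
  have inj: "inj_on (insert x) (Pow F)" using insert(2) by (auto simp: inj_on_def)
  have disj: "Pow F \<inter> insert x ` Pow F = {}" using insert(2) by auto
  have "(\<Sum>S\<in>Pow (insert x F). \<Prod>i\<in>S. sgn_b (P i)) =
      (\<Sum>S\<in>Pow F. \<Prod>i\<in>S. sgn_b (P i)) + (\<Sum>S\<in>insert x ` Pow F. \<Prod>i\<in>S. sgn_b (P i))"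
    unfolding Pow_insert using insert(1) disj by (intro sum.union_disjoint) auto
  also have "(\<Sum>S\<in>insert x ` Pow F. \<Prod>i\<in>S. sgn_b (P i)) =
      (\<Sum>S\<in>Pow F. \<Prod>i\<in>insert x S. sgn_b (P i))"
    using inj by (simp add: sum.reindex)
  also have "\<dots> = (\<Sum>S\<in>Pow F. sgn_b (P x) * (\<Prod>i\<in>S. sgn_b (P i)))"
  proof (rule sum.cong[OF refl])
    fix S assume "S \<in> Pow F"
    then have "finite S" "x \<notin> S" using insert finite_subset by auto
    then show "(\<Prod>i\<in>insert x S. sgn_b (P i)) = sgn_b (P x) * (\<Prod>i\<in>S. sgn_b (P i))" by simp
  qed
  also have "\<dots> = sgn_b (P x) * (\<Sum>S\<in>Pow F. \<Prod>i\<in>S. sgn_b (P i))" by (simp add: sum_distrib_left)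
  finally have eq: "(\<Sum>S\<in>Pow (insert x F). \<Prod>i\<in>S. sgn_b (P i)) =
      (1 + sgn_b (P x)) * (\<Sum>S\<in>Pow F. \<Prod>i\<in>S. sgn_b (P i))" by (simp add: algebra_simps)
  show ?case
  proof (cases "P x")
    case True then show ?thesis using eq by (simp add: sgn_b_def)
  next
    case False then show ?thesis using eq insert by (simp add: sgn_b_def)
  qed
qed

definition bsum :: "(nat \<Rightarrow> bool) \<Rightarrow> nat \<Rightarrow> nat" where
  "bsum b m = (\<Sum>i<m. 2 ^ i * (if b i then 1 else 0))"

lemma bsum_Suc: "bsum b (Suc m) = bsum b m + 2 ^ m * (if b m then 1 else 0)"
  by (simp add: bsum_def)

lemma bsum_lt: "bsum b m < 2 ^ m"
proof (induction m)
  case 0 then show ?case by (simp add: bsum_def)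
next
  case (Suc m) then show ?case by (simp add: bsum_Suc)
qed

lemma bit_lt: "(r::nat) < 2 ^ m \<Longrightarrow> bit r j \<Longrightarrow> j < m"
  using bit_take_bit_iff[of m r j] take_bit_nat_eq_self[of r m] by simp

lemma bit_bsum: "bit (bsum b m) j \<longleftrightarrow> (j < m \<and> b j)"
proof (induction m)
  case 0 then show ?case by (simp add: bsum_def)
next
  case (Suc m)
  show ?case
  proof (cases "b m")
    case False then show ?thesis using Suc by (auto simp: bsum_Suc less_Suc_eq)
  next
    case True
    have d: "\<And>n. \<not> bit (bsum b m) n \<or> \<not> bit ((2::nat) ^ m) n"
      using bit_lt[OF bsum_lt] by (auto simp: bit_exp_iff)
    have "bit (bsum b (Suc m)) j \<longleftrightarrow> bit (bsum b m) j \<or> bit ((2::nat) ^ m) j"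
      using True by (simp add: bsum_Suc bit_disjunctive_add_iff[OF d])
    then show ?thesis using Suc True by (auto simp: bit_exp_iff less_Suc_eq)
  qed
qed

lemma bit_inj: "(r::nat) < 2 ^ m \<Longrightarrow> r' < 2 ^ m \<Longrightarrow> (\<forall>i<m. bit r i = bit r' i) \<Longrightarrow> r = r'"
  by (rule bit_eqI) (metis bit_lt)

lemma maj_sgn: "sgn_b ((((p \<and> q) \<noteq> (p \<and> s)) \<noteq> (q \<and> s)) \<noteq> c) =
  (sgn_b (p \<noteq> c) + sgn_b (q \<noteq> c) + sgn_b (s \<noteq> c) - sgn_b (((p \<noteq> q) \<noteq> s) \<noteq> c)) / 2"
  by (cases p; cases q; cases s; cases c) (simp_all add: sgn_b_def)

lemma signs4: fixes a b c d :: real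
  assumes "a = 1 \<or> a = -1" "b = 1 \<or> b = -1" "c = 1 \<or> c = -1" "d = 1 \<or> d = -1"
    "\<bar>(a + b + c - d) / 2\<bar> = 1"
  shows "d = a * b * c"
  using assms by auto


lemma finite_Vn: "finite (Vn n)"
proof -
  have "Vn n \<subseteq> (\<lambda>S i. i \<in> S) ` Pow {..<n}"
  proof
    fix x assume x: "x \<in> Vn n"
    have "x = (\<lambda>i. i \<in> {i. i < n \<and> x i})" using x by (auto simp: Vn_def not_le[symmetric])
    then show "x \<in> (\<lambda>S i. i \<in> S) ` Pow {..<n}" by blast
  qed
  then show ?thesis by (rule finite_subset) simp
qed

locale gsetup = cyc m for m +
  fixes n :: nat and a :: "nat \<Rightarrow> (nat \<Rightarrow> bool) \<Rightarrow> bool"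
begin

definition V where "V = Vn n"
definition rho where "rho x = bsum (\<lambda>i. a i x) m"
definition D :: "nat \<Rightarrow> (nat \<Rightarrow> bool) \<Rightarrow> int" where
  "D r u = (\<Sum>x\<in>V. if rho x = r then (if a m x \<noteq> ip n u x then -1 else 1) else 0)"
definition Hf where
  "Hf u = (\<Sum>x\<in>V. z ^ (rho x + N * (if a m x then 1 else 0)) * complex_of_real (sgn_b (ip n u x)))"
definition G where "G h x = (a m x \<noteq> h (rho x))"
definition W where "W g u = (\<Sum>x\<in>V. sgn_b (g x \<noteq> ip n u x))"

lemma finite_V: "finite V" by (simp add: V_def finite_Vn)

lemma rho_lt: "rho x < N" by (simp add: rho_def N_def bsum_lt)

lemma bit_rho: "i < m \<Longrightarrow> bit (rho x) i = a i x" by (simp add: rho_def bit_bsum)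

lemma sum_pick: "r0 < N \<Longrightarrow> (\<Sum>r<N. (if r0 = r then g r else 0)) = (g r0 :: 'b::comm_monoid_add)"
  by (simp add: sum.delta)

lemma H_eq: "Hf u = (\<Sum>r<N. of_int (D r u) * z ^ r)"
proof -
  define c where "c x = (if a m x \<noteq> ip n u x then -1 else 1 :: int)" for x
  have "Hf u = (\<Sum>x\<in>V. z ^ rho x * of_int (c x))"
    unfolding Hf_def
  proof (rule sum.cong[OF refl])
    fix x
    show "z ^ (rho x + N * (if a m x then 1 else 0)) * complex_of_real (sgn_b (ip n u x)) =
        z ^ rho x * of_int (c x)"
      by (cases "a m x"; cases "ip n u x") (simp_all add: c_def sgn_b_def power_add z_N)
  qed
  also have "\<dots> = (\<Sum>x\<in>V. \<Sum>r<N. (if rho x = r then z ^ r * of_int (c x) else 0))"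
    using rho_lt by (intro sum.cong refl) (simp add: sum.delta)
  also have "\<dots> = (\<Sum>r<N. \<Sum>x\<in>V. (if rho x = r then z ^ r * of_int (c x) else 0))"
    by (rule sum.swap)
  also have "\<dots> = (\<Sum>r<N. of_int (D r u) * z ^ r)"
  proof (intro sum.cong refl)
    fix r
    have eqD: "D r u = (\<Sum>x\<in>V. if rho x = r then c x else 0)" unfolding D_def c_def by (rule refl)
    show "(\<Sum>x\<in>V. (if rho x = r then z ^ r * of_int (c x) else 0)) = of_int (D r u) * z ^ r"
      unfolding eqD of_int_sum sum_distrib_right by (intro sum.cong refl) simp
  qed
  finally show ?thesis .
qed

lemma W_G: "W (G h) u = (\<Sum>r<N. sgn_b (h r) * of_int (D r u))"
proof -
  define c where "c x = (if a m x \<noteq> ip n u x then -1 else 1 :: int)" for x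
  have "W (G h) u = (\<Sum>x\<in>V. sgn_b (h (rho x)) * of_int (c x))"
    unfolding W_def G_def
    by (intro sum.cong refl) (simp add: c_def sgn_b_def)
  also have "\<dots> = (\<Sum>x\<in>V. \<Sum>r<N. (if rho x = r then sgn_b (h r) * of_int (c x) else 0))"
    using rho_lt by (intro sum.cong refl) (simp add: sum.delta)
  also have "\<dots> = (\<Sum>r<N. \<Sum>x\<in>V. (if rho x = r then sgn_b (h r) * of_int (c x) else 0))"
    by (rule sum.swap)
  also have "\<dots> = (\<Sum>r<N. sgn_b (h r) * of_int (D r u))"
  proof (intro sum.cong refl)
    fix r
    have eqD: "D r u = (\<Sum>x\<in>V. if rho x = r then c x else 0)" unfolding D_def c_def by (rule refl)
    show "(\<Sum>x\<in>V. (if rho x = r then sgn_b (h r) * of_int (c x) else 0)) = sgn_b (h r) * of_int (D r u)"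
      unfolding eqD of_int_sum sum_distrib_left by (intro sum.cong refl) simp
  qed
  finally show ?thesis .
qed

lemma Hf_Zz: "Hf u \<in> Zz"
  unfolding H_eq by (intro Zz_sum Zz_mult Zz_of_int Zz_pow Zz_z)

lemma Hf_struct:
  assumes "cmod (Hf u) = 2 ^ h0"
  shows "\<exists>c r0. r0 < N \<and> (c = 1 \<or> c = -1) \<and> (\<forall>r<N. D r u = (if r = r0 then 2 ^ h0 * c else 0))"
proof -
  have "Hf u * cnj (Hf u) = of_real ((cmod (Hf u)) ^ 2)" by (rule complex_norm_square[symmetric])
  also have "\<dots> = 2 ^ (2 * h0)" using assms by (simp add: power_mult[symmetric] mult.commute)
  finally obtain c r0 where cr: "r0 < N" "c = 1 \<or> c = -1" "Hf u = 2 ^ h0 * of_int c * z ^ r0"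
    using main_nt[OF Hf_Zz] by blast
  define d where "d r = D r u - (if r = r0 then 2 ^ h0 * c else 0)" for r
  have "(\<Sum>r<N. of_int (d r) * z ^ r) = (\<Sum>r<N. of_int (D r u) * z ^ r -
      (if r0 = r then 2 ^ h0 * of_int c * z ^ r else 0))"
    by (intro sum.cong refl) (simp add: d_def algebra_simps)
  also have "\<dots> = (\<Sum>r<N. of_int (D r u) * z ^ r) -
      (\<Sum>r<N. (if r0 = r then 2 ^ h0 * of_int c * z ^ r else 0))"
    by (rule sum_subtractf)
  also have "(\<Sum>r<N. (if r0 = r then 2 ^ h0 * of_int c * z ^ r else 0)) = 2 ^ h0 * of_int c * z ^ r0"
    using cr(1) by (simp add: sum.delta)
  also have "(\<Sum>r<N. of_int (D r u) * z ^ r) = Hf u" by (simp add: H_eq)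
  also have "Hf u - 2 ^ h0 * of_int c * z ^ r0 = 0" using cr(3) by simp
  finally have "(\<Sum>r<N. of_int (d r) * z ^ r) = 0" .
  then have "\<forall>r<N. d r = 0" using LI_sum by blast
  then show ?thesis using cr by (auto simp: d_def)
qed


lemma powr_half: "n = 2 * h0 \<Longrightarrow> (2::real) powr (real n / 2) = 2 ^ h0"
  by (simp add: powr_realpow)

lemma bent_of_gbent:
  assumes "n = 2 * h0" "\<forall>u\<in>V. cmod (Hf u) = 2 ^ h0"
  shows "bent n (G hh)"
  unfolding bent_def powr_half[OF assms(1)]
proof
  fix u assume u: "u \<in> Vn n"
  obtain c r0 where cr: "r0 < N" "c = 1 \<or> c = -1" "\<forall>r<N. D r u = (if r = r0 then 2 ^ h0 * c else 0)"
    using Hf_struct assms(2) u V_def by blast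
  have "(\<Sum>x\<in>Vn n. sgn_b (G hh x \<noteq> ip n u x)) = W (G hh) u" by (simp add: W_def V_def)
  also have "\<dots> = (\<Sum>r<N. (if r0 = r then sgn_b (hh r) * (2 ^ h0 * of_int c) else 0))"
    unfolding W_G using cr(3) by (intro sum.cong refl) auto
  also have "\<dots> = sgn_b (hh r0) * (2 ^ h0 * of_int c)" using cr(1) by (simp add: sum.delta)
  finally show "\<bar>\<Sum>x\<in>Vn n. sgn_b (G hh x \<noteq> ip n u x)\<bar> = 2 ^ h0"
    using cr(2) by (auto simp: abs_mult abs_sgn_b)
qed

definition gS where "gS S x = (a m x \<noteq> xor_sum a S x)"
definition maj3 where "maj3 g1 g2 g3 x = (((g1 x \<and> g2 x) \<noteq> (g1 x \<and> g3 x)) \<noteq> (g2 x \<and> g3 x))"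
definition chi where "chi S r = (\<Prod>i\<in>S. sgn_b (bit r i))"

lemma gS_G: "S \<subseteq> {..<m} \<Longrightarrow> gS S = G (\<lambda>r. odd (card {i\<in>S. bit r i}))"
proof
  fix x assume S: "S \<subseteq> {..<m}"
  have "{i\<in>S. bit (rho x) i} = {i\<in>S. a i x}" using S bit_rho by auto
  then show "gS S x = G (\<lambda>r. odd (card {i\<in>S. bit r i})) x"
    by (simp add: gS_def G_def xor_sum_def)
qed

lemma W_gS: "S \<subseteq> {..<m} \<Longrightarrow> W (gS S) u = (\<Sum>r<N. chi S r * of_int (D r u))"
proof -
  assume S: "S \<subseteq> {..<m}"
  then have fin: "finite S" by (rule finite_subset) simp
  show ?thesis unfolding gS_G[OF S] W_G chi_def prod_sgn[OF fin] by (rule refl)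
qed

lemma W_maj: "W (maj3 g1 g2 g3) u = (W g1 u + W g2 u + W g3 u - W (\<lambda>x. (g1 x \<noteq> g2 x) \<noteq> g3 x) u) / 2"
  unfolding W_def maj3_def maj_sgn
  by (simp add: sum_divide_distrib[symmetric] sum.distrib sum_subtractf)

lemma xor_sum_insert: "finite S \<Longrightarrow> i \<notin> S \<Longrightarrow> xor_sum a (insert i S) x = (xor_sum a S x \<noteq> a i x)"
proof -
  assume fin: "finite S" and i: "i \<notin> S"
  have fin2: "finite {j\<in>S. a j x}" using fin by simp
  show ?thesis
  proof (cases "a i x")
    case True
    then have "{j\<in>insert i S. a j x} = insert i {j\<in>S. a j x}" by auto
    then have "card {j\<in>insert i S. a j x} = Suc (card {j\<in>S. a j x})" using fin2 i by simp
    then show ?thesis using True by (simp add: xor_sum_def)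
  next
    case False
    then have "{j\<in>insert i S. a j x} = {j\<in>S. a j x}" by auto
    then show ?thesis using False by (simp add: xor_sum_def)
  qed
qed

lemma xor3: "finite S \<Longrightarrow> i \<notin> S \<Longrightarrow> (\<lambda>x. (gS S x \<noteq> gS {i} x) \<noteq> gS {} x) = gS (insert i S)"
proof
  fix x assume "finite S" "i \<notin> S"
  then have "xor_sum a (insert i S) x = (xor_sum a S x \<noteq> a i x)" by (rule xor_sum_insert)
  moreover have "xor_sum a {i} x = a i x"
  proof -
    have "{j\<in>{i}. a j x} = (if a i x then {i} else {})" by auto
    then show ?thesis by (simp add: xor_sum_def)
  qed
  moreover have "\<not> xor_sum a {} x" by (simp add: xor_sum_def)
  ultimately show "((gS S x \<noteq> gS {i} x) \<noteq> gS {} x) = gS (insert i S) x"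
    by (auto simp: gS_def)
qed

lemma chi_orth: assumes "r < N" "r' < N"
  shows "(\<Sum>S\<in>Pow {..<m}. chi S r * chi S r') = (if r = r' then real N else 0)"
proof -
  have "(\<Sum>S\<in>Pow {..<m}. chi S r * chi S r') = (\<Sum>S\<in>Pow {..<m}. \<Prod>i\<in>S. sgn_b (bit r i \<noteq> bit r' i))"
    unfolding chi_def by (intro sum.cong refl) (simp only: prod.distrib[symmetric] sgn_b_xor[symmetric])
  also have "\<dots> = (if \<forall>i\<in>{..<m}. \<not> (bit r i \<noteq> bit r' i) then 2 ^ card {..<m::nat} else 0)"
    by (rule hadamard) simp
  also have "(\<forall>i\<in>{..<m}. \<not> (bit r i \<noteq> bit r' i)) \<longleftrightarrow> r = r'"
    using bit_inj[of r m r'] assms by (auto simp: N_def)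
  finally show ?thesis by (simp add: N_def)
qed

lemma gbent_of_bent:
  assumes u: "u \<in> V"
    and B: "\<forall>S\<subseteq>{..<m}. \<bar>W (gS S) u\<bar> = 2 ^ h0"
    and M: "\<forall>S\<subseteq>{..<m}. \<forall>i<m. i \<notin> S \<longrightarrow> \<bar>W (maj3 (gS S) (gS {i}) (gS {})) u\<bar> = 2 ^ h0"
  shows "cmod (Hf u) = 2 ^ h0"
proof -
  define sg where "sg S = W (gS S) u / 2 ^ h0" for S
  have wS: "W (gS S) u = 2 ^ h0 * sg S" for S by (simp add: sg_def)
  have sg1: "sg S = 1 \<or> sg S = -1" if "S \<subseteq> {..<m}" for S
  proof -
    have "\<bar>sg S\<bar> = 1" using B that by (simp add: sg_def abs_divide)
    then show ?thesis by linarith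
  qed
  have step: "sg (insert i S) = sg S * sg {i} * sg {}" if S: "S \<subseteq> {..<m}" and i: "i < m" "i \<notin> S" for S i
  proof -
    have fin: "finite S" using S by (rule finite_subset) simp
    have m1: "\<bar>W (maj3 (gS S) (gS {i}) (gS {})) u\<bar> = 2 ^ h0" using M S i by blast
    have m2: "W (maj3 (gS S) (gS {i}) (gS {})) u =
        (W (gS S) u + W (gS {i}) u + W (gS {}) u - W (gS (insert i S)) u) / 2"
      using W_maj[of "gS S" "gS {i}" "gS {}" u] xor3[OF fin i(2)] by simp
    have "\<bar>(W (gS S) u + W (gS {i}) u + W (gS {}) u - W (gS (insert i S)) u) / 2\<bar> = 2 ^ h0"
      using m1 unfolding m2 .
    moreover have "(W (gS S) u + W (gS {i}) u + W (gS {}) u - W (gS (insert i S)) u) / 2 =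
        2 ^ h0 * ((sg S + sg {i} + sg {} - sg (insert i S)) / 2)"
      unfolding wS by (simp add: algebra_simps)
    ultimately have "2 ^ h0 * \<bar>(sg S + sg {i} + sg {} - sg (insert i S)) / 2\<bar> = 2 ^ h0 * 1"
      by (simp add: abs_mult)
    then have h5: "\<bar>(sg S + sg {i} + sg {} - sg (insert i S)) / 2\<bar> = 1"
      by (subst (asm) mult_left_cancel) simp_all
    have h1: "sg S = 1 \<or> sg S = -1" using sg1 S by blast
    have h2: "sg {i} = 1 \<or> sg {i} = -1" using sg1 i by simp
    have h3: "sg {} = 1 \<or> sg {} = -1" using sg1 by simp
    have h4: "sg (insert i S) = 1 \<or> sg (insert i S) = -1" using sg1 S i by simp
    show ?thesis using signs4[OF h1 h2 h3 h4 h5] by assumption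
  qed
  have prodform: "sg S = sg {} * (\<Prod>j\<in>S. sg {j} * sg {})" if S: "S \<subseteq> {..<m}" for S
  proof -
    have fin: "finite S" using S by (rule finite_subset) simp
    show ?thesis using fin S
    proof (induction S rule: finite_subset_induct')
      case empty then show ?case by simp
    next
      case (insert x F)
      have "x < m" using insert.hyps(2) by simp
      then have e1: "sg (insert x F) = sg F * sg {x} * sg {}" using step[of F x] insert.hyps(3,4) by blast
      have e2: "(\<Prod>j\<in>insert x F. sg {j} * sg {}) = (sg {x} * sg {}) * (\<Prod>j\<in>F. sg {j} * sg {})"
        using insert.hyps(1,4) by (rule prod.insert)
      show ?case unfolding e1 e2 insert.IH by (simp only: mult_ac)
    qed
  qed
  define b where "b j = (sg {j} * sg {} = -1)" for j
  define \<beta> where "\<beta> = bsum b m"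
  have \<beta>N: "\<beta> < N" by (simp add: \<beta>_def N_def bsum_lt)
  have sgb: "sg {j} * sg {} = sgn_b (bit \<beta> j)" if "j < m" for j
  proof -
    have "bit \<beta> j = b j" using that by (simp add: \<beta>_def bit_bsum)
    moreover have "sg {j} = 1 \<or> sg {j} = -1" "sg {} = 1 \<or> sg {} = -1" using sg1 that by auto
    ultimately show ?thesis by (auto simp: b_def sgn_b_def)
  qed
  have wchi: "W (gS S) u = 2 ^ h0 * sg {} * chi S \<beta>" if S: "S \<subseteq> {..<m}" for S
  proof -
    have "sg S = sg {} * chi S \<beta>"
      unfolding prodform[OF S] chi_def using S sgb by (intro arg_cong[where f="\<lambda>t. sg {} * t"] prod.cong) auto
    then show ?thesis by (simp add: wS)
  qed
  have Dr: "real_of_int (D r u) = (if r = \<beta> then 2 ^ h0 * sg {} else 0)" if r: "r < N" for r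
  proof -
    have "(\<Sum>S\<in>Pow {..<m}. chi S r * W (gS S) u) = (\<Sum>S\<in>Pow {..<m}. \<Sum>r'<N. chi S r * (chi S r' * of_int (D r' u)))"
      by (intro sum.cong refl) (simp add: W_gS sum_distrib_left)
    also have "\<dots> = (\<Sum>r'<N. \<Sum>S\<in>Pow {..<m}. of_int (D r' u) * (chi S r * chi S r'))"
      by (subst sum.swap) (simp add: mult_ac)
    also have "\<dots> = (\<Sum>r'<N. of_int (D r' u) * (if r = r' then real N else 0))"
      using r by (intro sum.cong refl) (simp add: sum_distrib_left[symmetric] chi_orth)
    also have "\<dots> = of_int (D r u) * real N" using r by (simp add: if_distrib sum.delta cong: if_cong)
    finally have l: "(\<Sum>S\<in>Pow {..<m}. chi S r * W (gS S) u) = of_int (D r u) * real N" .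
    have "(\<Sum>S\<in>Pow {..<m}. chi S r * W (gS S) u) = (\<Sum>S\<in>Pow {..<m}. 2 ^ h0 * sg {} * (chi S r * chi S \<beta>))"
      by (intro sum.cong refl) (simp add: wchi mult_ac)
    also have "\<dots> = 2 ^ h0 * sg {} * (if r = \<beta> then real N else 0)"
      using r \<beta>N by (simp add: sum_distrib_left[symmetric] chi_orth)
    finally have "of_int (D r u) * real N = 2 ^ h0 * sg {} * (if r = \<beta> then real N else 0)" using l by simp
    then show ?thesis using N_pos by (auto split: if_splits)
  qed
  have "Hf u = (\<Sum>r<N. of_real (real_of_int (D r u)) * z ^ r)" by (simp add: H_eq)
  also have "\<dots> = (\<Sum>r<N. (if \<beta> = r then of_real (2 ^ h0 * sg {}) * z ^ r else 0))"
    by (intro sum.cong refl) (simp add: Dr)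
  also have "\<dots> = of_real (2 ^ h0 * sg {}) * z ^ \<beta>" using \<beta>N by (simp add: sum.delta)
  finally have "cmod (Hf u) = \<bar>2 ^ h0 * sg {}\<bar>" by (simp add: norm_mult norm_power norm_z abs_mult)
  then show ?thesis using sg1[of "{}"] by (auto simp: abs_mult)
qed


lemma gS_eq: "gS S = (\<lambda>x. a m x \<noteq> xor_sum a S x)" by (simp add: gS_def fun_eq_iff)

lemma aff_eq: "aff_space (a m) a m = gS ` Pow {..<m}"
  unfolding aff_space_def gS_eq by auto

lemma sgn_xor_sum: "finite S \<Longrightarrow> sgn_b (xor_sum a S x) = (\<Prod>i\<in>S. sgn_b (a i x))"
  by (simp add: xor_sum_def prod_sgn)

lemma sgn_sq_prod: "finite S \<Longrightarrow> (\<Prod>i\<in>S. sgn_b (P i)) * (\<Prod>i\<in>S. sgn_b (P i)) = 1"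
  by (simp add: prod.distrib[symmetric] sgn_b_sq)

lemma card_A:
  assumes li: "lin_indep_bool n a m"
  shows "card ((\<lambda>g. restrict g (Vn n)) ` aff_space (a m) a m) = 2 ^ m"
proof -
  have inj: "inj_on (\<lambda>S. restrict (gS S) (Vn n)) (Pow {..<m})"
  proof (rule inj_onI)
    fix S S' assume S: "S \<in> Pow {..<m}" and S': "S' \<in> Pow {..<m}"
      and eq: "restrict (gS S) (Vn n) = restrict (gS S') (Vn n)"
    have finS: "finite S" "finite S'" using S S' finite_subset by auto
    define T where "T = (S - S') \<union> (S' - S)"
    have finT: "finite T" using finS by (simp add: T_def)
    have "\<forall>x\<in>Vn n. \<not> xor_sum a T x"
    proof
      fix x assume x: "x \<in> Vn n"
      have "gS S x = gS S' x" using fun_cong[OF eq, of x] x by simp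
      then have xe: "xor_sum a S x = xor_sum a S' x" by (cases "a m x") (simp_all add: gS_def)
      define p where "p X = (\<Prod>i\<in>X. sgn_b (a i x))" for X
      have pS: "p S = p (S - S') * p (S \<inter> S')"
        unfolding p_def using finS prod.Int_Diff[of S _ S'] by (simp add: mult.commute)
      have pS': "p S' = p (S' - S) * p (S \<inter> S')"
        unfolding p_def using finS prod.Int_Diff[of S' _ S] by (simp add: mult.commute Int_commute)
      have pT: "p T = p (S - S') * p (S' - S)"
        unfolding p_def T_def using finS by (intro prod.union_disjoint) auto
      have sq: "p (S \<inter> S') * p (S \<inter> S') = 1" unfolding p_def using finS by (intro sgn_sq_prod) simp
      have "p S * p S' = p T"
      proof -
        have "p S * p S' = p (S - S') * p (S' - S) * (p (S \<inter> S') * p (S \<inter> S'))"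
          by (simp add: pS pS' mult_ac)
        then show ?thesis using sq pT by simp
      qed
      moreover have "p S * p S' = 1"
      proof -
        have e1: "p S = sgn_b (xor_sum a S x)" using sgn_xor_sum[OF finS(1), of x] by (simp add: p_def)
        have e2: "p S' = sgn_b (xor_sum a S' x)" using sgn_xor_sum[OF finS(2), of x] by (simp add: p_def)
        show ?thesis unfolding e1 e2 xe by (rule sgn_b_sq)
      qed
      ultimately have "sgn_b (xor_sum a T x) = 1" using sgn_xor_sum[OF finT, of x] by (simp add: p_def)
      then show "\<not> xor_sum a T x" by (simp add: sgn_b_def split: if_splits)
    qed
    moreover have "T \<subseteq> {..<m}" using S S' by (auto simp: T_def)
    ultimately have "T = {}" using li unfolding lin_indep_bool_def by blast
    then show "S = S'" by (auto simp: T_def)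
  qed
  have "(\<lambda>g. restrict g (Vn n)) ` aff_space (a m) a m = (\<lambda>S. restrict (gS S) (Vn n)) ` Pow {..<m}"
    unfolding aff_eq by (simp add: image_image)
  then show ?thesis using card_image[OF inj] by (simp add: card_Pow)
qed

lemma G_maj: "(\<lambda>x. ((G h1 x \<and> G h2 x) \<noteq> (G h1 x \<and> G h3 x)) \<noteq> (G h2 x \<and> G h3 x)) =
  G (\<lambda>r. ((h1 r \<and> h2 r) \<noteq> (h1 r \<and> h3 r)) \<noteq> (h2 r \<and> h3 r))"
  by (auto simp: G_def fun_eq_iff)

end

theorem theorem2:
  fixes n k :: nat and a :: "nat \<Rightarrow> (nat \<Rightarrow> bool) \<Rightarrow> bool"
    and f :: "(nat \<Rightarrow> bool) \<Rightarrow> nat"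
  assumes "even n" and "k \<ge> 2"
    and "\<And>x. f x = (\<Sum>i<k. 2 ^ i * (if a i x then 1 else 0))"
    and "lin_indep_bool n a (k - 1)"
  shows "gbent n k f \<longleftrightarrow>
    (let A = aff_space (a (k - 1)) a (k - 1) in
       card ((\<lambda>g. restrict g (Vn n)) ` A) = 2 ^ (k - 1)
     \<and> (\<forall>g\<in>A. bent n g)
     \<and> (\<forall>gi\<in>A. \<forall>gj\<in>A. \<forall>gl\<in>A.
          bent n (\<lambda>x. ((gi x \<and> gj x) \<noteq> (gi x \<and> gl x)) \<noteq> (gj x \<and> gl x))))"
proof -
  define m where "m = k - 1"
  have m1: "1 \<le> m" using assms(2) by (simp add: m_def)
  have km: "k = Suc m" using assms(2) by (simp add: m_def)
  interpret G: gsetup m n a by unfold_locales (rule m1)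
  obtain h0 where h0: "n = 2 * h0" using assms(1) by blast
  have fx: "f x = G.rho x + G.N * (if a m x then 1 else 0)" for x
    using assms(3)[of x] by (simp add: km G.rho_def bsum_def G.N_def)
  have cisf: "cis (2 * pi * real (f x) / 2 ^ k) = G.z ^ (f x)" for x
  proof -
    have "G.z ^ (f x) = cis (real (f x) * (pi / 2 ^ m))" unfolding G.z_def by (rule Complex.DeMoivre)
    also have "real (f x) * (pi / 2 ^ m) = 2 * pi * real (f x) / 2 ^ k" by (simp add: km field_simps)
    finally show ?thesis by simp
  qed
  have gb: "gbent n k f \<longleftrightarrow> (\<forall>u\<in>G.V. cmod (G.Hf u) = 2 ^ h0)"
  proof -
    have "(\<Sum>x\<in>Vn n. cis (2 * pi * real (f x) / 2 ^ k) * complex_of_real (sgn_b (ip n u x))) = G.Hf u" for u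
      unfolding G.Hf_def G.V_def by (intro sum.cong refl) (subst cisf, simp only: fx)
    then show ?thesis unfolding gbent_def G.powr_half[OF h0] G.V_def by simp
  qed
  have memA: "G.gS S \<in> aff_space (a m) a m" if "S \<subseteq> {..<m}" for S
    using that by (simp add: G.aff_eq)
  show ?thesis
    unfolding Let_def m_def[symmetric] gb
  proof
    assume H: "\<forall>u\<in>G.V. cmod (G.Hf u) = 2 ^ h0"
    have bentG: "bent n (G.G hh)" for hh using G.bent_of_gbent[OF h0 H] .
    have isG: "\<exists>hh. g = G.G hh" if "g \<in> aff_space (a m) a m" for g
    proof -
      have "g \<in> G.gS ` Pow {..<m}" using that unfolding G.aff_eq .
      then obtain S where S0: "S \<in> Pow {..<m}" "g = G.gS S" by (rule imageE) simp
      then have S: "S \<subseteq> {..<m}" "g = G.gS S" by simp_all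
      have "g = G.G (\<lambda>r. odd (card {i\<in>S. bit r i}))" unfolding S(2) by (rule G.gS_G[OF S(1)])
      then show ?thesis by (rule exI[where x="\<lambda>r. odd (card {i\<in>S. bit r i})"])
    qed
    have c1: "card ((\<lambda>g. restrict g (Vn n)) ` aff_space (a m) a m) = 2 ^ m"
      by (rule G.card_A) (use assms(4) in \<open>simp only: m_def\<close>)
    have c2: "\<forall>g\<in>aff_space (a m) a m. bent n g"
    proof
      fix g assume "g \<in> aff_space (a m) a m"
      then obtain hh where "g = G.G hh" using isG by blast
      then show "bent n g" using bentG by simp
    qed
    have c3: "\<forall>gi\<in>aff_space (a m) a m. \<forall>gj\<in>aff_space (a m) a m. \<forall>gl\<in>aff_space (a m) a m.
          bent n (\<lambda>x. ((gi x \<and> gj x) \<noteq> (gi x \<and> gl x)) \<noteq> (gj x \<and> gl x))"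
    proof (intro ballI)
      fix gi gj gl assume "gi \<in> aff_space (a m) a m" "gj \<in> aff_space (a m) a m" "gl \<in> aff_space (a m) a m"
      then obtain h1 h2 h3 where e: "gi = G.G h1" "gj = G.G h2" "gl = G.G h3" using isG by meson
      show "bent n (\<lambda>x. ((gi x \<and> gj x) \<noteq> (gi x \<and> gl x)) \<noteq> (gj x \<and> gl x))"
        unfolding e G.G_maj by (rule bentG)
    qed
    show "card ((\<lambda>g. restrict g (Vn n)) ` aff_space (a m) a m) = 2 ^ m \<and>
      (\<forall>g\<in>aff_space (a m) a m. bent n g) \<and>
      (\<forall>gi\<in>aff_space (a m) a m. \<forall>gj\<in>aff_space (a m) a m. \<forall>gl\<in>aff_space (a m) a m.
          bent n (\<lambda>x. ((gi x \<and> gj x) \<noteq> (gi x \<and> gl x)) \<noteq> (gj x \<and> gl x)))"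
      by (rule conjI[OF c1 conjI[OF c2 c3]])
  next
    assume R: "card ((\<lambda>g. restrict g (Vn n)) ` aff_space (a m) a m) = 2 ^ m \<and>
      (\<forall>g\<in>aff_space (a m) a m. bent n g) \<and>
      (\<forall>gi\<in>aff_space (a m) a m. \<forall>gj\<in>aff_space (a m) a m. \<forall>gl\<in>aff_space (a m) a m.
          bent n (\<lambda>x. ((gi x \<and> gj x) \<noteq> (gi x \<and> gl x)) \<noteq> (gj x \<and> gl x)))"
    show "\<forall>u\<in>G.V. cmod (G.Hf u) = 2 ^ h0"
    proof
      fix u assume u: "u \<in> G.V"
      have bentW: "\<bar>G.W g u\<bar> = 2 ^ h0" if "bent n g" for g
        using that u unfolding bent_def G.powr_half[OF h0] G.W_def G.V_def by blast
      show "cmod (G.Hf u) = 2 ^ h0"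
      proof (rule G.gbent_of_bent[OF u])
        show "\<forall>S\<subseteq>{..<m}. \<bar>G.W (G.gS S) u\<bar> = 2 ^ h0"
          using R memA bentW by blast
        show "\<forall>S\<subseteq>{..<m}. \<forall>i<m. i \<notin> S \<longrightarrow> \<bar>G.W (G.maj3 (G.gS S) (G.gS {i}) (G.gS {})) u\<bar> = 2 ^ h0"
        proof (intro allI impI)
          fix S i assume S: "S \<subseteq> {..<m}" and i: "i < m" "i \<notin> S"
          have "G.gS S \<in> aff_space (a m) a m" "G.gS {i} \<in> aff_space (a m) a m" "G.gS {} \<in> aff_space (a m) a m"
            using S i memA by auto
          then have "bent n (\<lambda>x. ((G.gS S x \<and> G.gS {i} x) \<noteq> (G.gS S x \<and> G.gS {} x)) \<noteq> (G.gS {i} x \<and> G.gS {} x))"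
            using R by blast
          moreover have "G.maj3 (G.gS S) (G.gS {i}) (G.gS {}) =
              (\<lambda>x. ((G.gS S x \<and> G.gS {i} x) \<noteq> (G.gS S x \<and> G.gS {} x)) \<noteq> (G.gS {i} x \<and> G.gS {} x))"
            by (simp add: G.maj3_def fun_eq_iff)
          ultimately show "\<bar>G.W (G.maj3 (G.gS S) (G.gS {i}) (G.gS {})) u\<bar> = 2 ^ h0"
            using bentW by simp
        qed
      qed
    qed
  qed
qed

end
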